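(* Let $n\ge 3$ and $S_n$ be as defined below. The element $z=a_1a_2\cdots a_n$ is central in $S_n$. Moreover, let $\pi\colon FM_n\to S_n$ be the natural epimorphism from the free monoid on $a_1,\dots,a_n$ and let $P=zS_n$. Then $S_n\setminus P=\{a\in S_n : |\pi^{-1}(a)|=1\}$, i.e. an element of $S_n$ has a unique word representative in $FM_n$ if and only if it does not lie in $P$. Consequently the Rees quotient $S_n/P$ is isomorphic to the Rees quotient $FM_n/\pi^{-1}(P)$ (via the natural map), and $K[S_n]/K[P]$ is isomorphic to a monomial algebra (a quotient of the free algebra $K\langle a_1,\dots,a_n\rangle$ by an ideal spanned by words), for any field $K$.
   Context: For $n\ge 3$, $S_n$ denotes the monoid with generators $a_1,\dots,a_n$ and defining relations $a_1a_2\cdots a_n=a_{\sigma(1)}a_{\sigma(2)}\cdots a_{\sigma(n)}$ for all $\sigma$ in the cyclic subgroup of $\operatorname{Sym}_n$ generated by the cycle $(1,2,\dots,n)$. $K[S_n]$ denotes the monoid algebra over a field $K$, and for an ideal $I$ of $S_n$, $K[I]$ denotes the $K$-linear span of $I$ in $K[S_n]$ (an ideal of $K[S_n]$). *)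

theory Defs
  imports "HOL-Algebra.Algebra"
begin

text \<open>Letters a_1,...,a_n are encoded as the natural numbers 0,...,n-1;
  words of the free monoid FM_n are lists over {..<n}.\<close>

definition FM :: "nat \<Rightarrow> nat list monoid" where
  "FM n = \<lparr>carrier = lists {..<n}, monoid.mult = (@), one = []\<rparr>"

definition zword :: "nat \<Rightarrow> nat list" where
  "zword n = [0..<n]"

text \<open>The defining relations: a_{s(1)}...a_{s(n)} for s in the cyclic group generated by
  (1 2 ... n) are exactly the rotations of z; one elementary step replaces, inside a word,
  one such rotation by another.\<close>
definition Sstep :: "nat \<Rightarrow> (nat list \<times> nat list) set" where
  "Sstep n = {(u @ rotate i (zword n) @ v, u @ rotate j (zword n) @ v) | u v i j.
               u \<in> lists {..<n} \<and> v \<in> lists {..<n}}"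

definition Scong :: "nat \<Rightarrow> nat list rel" where
  "Scong n = Id_on (lists {..<n}) \<union> (Sstep n)\<^sup>+"

text \<open>natural epimorphism pi : FM_n \<rightarrow> S_n (elements of S_n are congruence classes)\<close>
definition spi :: "nat \<Rightarrow> nat list \<Rightarrow> nat list set" where
  "spi n w = Scong n `` {w}"

definition S :: "nat \<Rightarrow> nat list set monoid" where
  "S n = \<lparr>carrier = spi n ` lists {..<n},
          monoid.mult = (\<lambda>A B. Scong n `` {u @ v | u v. u \<in> A \<and> v \<in> B}),
          one = spi n []\<rparr>"

text \<open>Rees quotient M/I of a monoid by an ideal I; the zero is None.\<close>
definition rees :: "('a, 'b) monoid_scheme \<Rightarrow> 'a set \<Rightarrow> 'a option monoid" where
  "rees M I = \<lparr>carrier = insert None (Some ` (carrier M - I)),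
     monoid.mult = (\<lambda>x y. case (x, y) of
        (Some a, Some b) \<Rightarrow> (if a \<otimes>\<^bsub>M\<^esub> b \<in> I then None else Some (a \<otimes>\<^bsub>M\<^esub> b))
      | _ \<Rightarrow> None),
     one = (if \<one>\<^bsub>M\<^esub> \<in> I then None else Some \<one>\<^bsub>M\<^esub>)\<rparr>"

text \<open>Monoid algebra K[M] over a field type 'k: finitely supported functions on carrier M
  with convolution product.\<close>
definition monoid_alg :: "('a, 'b) monoid_scheme \<Rightarrow> ('a \<Rightarrow> 'k::field) ring" where
  "monoid_alg M = \<lparr>carrier = {f. finite {x. f x \<noteq> 0} \<and> (\<forall>x. x \<notin> carrier M \<longrightarrow> f x = 0)},
     monoid.mult = (\<lambda>f g x. \<Sum>p\<in>{(a, b). a \<in> carrier M \<and> b \<in> carrier M \<and> f a \<noteq> 0 \<and> g b \<noteq> 0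
                                       \<and> a \<otimes>\<^bsub>M\<^esub> b = x}. f (fst p) * g (snd p)),
     one = (\<lambda>x. if x = \<one>\<^bsub>M\<^esub> then 1 else 0),
     ring.zero = (\<lambda>x. 0),
     ring.add = (\<lambda>f g x. f x + g x)\<rparr>"

text \<open>K[I]: the K-linear span of a subset I of M inside K[M].\<close>
definition lin_span :: "('a, 'b) monoid_scheme \<Rightarrow> 'a set \<Rightarrow> ('a \<Rightarrow> 'k::field) set" where
  "lin_span M I = {f \<in> carrier (monoid_alg M :: ('a \<Rightarrow> 'k) ring). \<forall>x. f x \<noteq> 0 \<longrightarrow> x \<in> I}"

definition scal :: "'k::field \<Rightarrow> ('a \<Rightarrow> 'k) \<Rightarrow> ('a \<Rightarrow> 'k)" where
  "scal c f = (\<lambda>x. c * f x)"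

definition alg_iso_quot :: "(('a \<Rightarrow> 'k::field) set) ring \<Rightarrow> (('b \<Rightarrow> 'k) set) ring
    \<Rightarrow> (('a \<Rightarrow> 'k) set \<Rightarrow> ('b \<Rightarrow> 'k) set) set" where
  "alg_iso_quot A B = {h \<in> ring_iso A B. \<forall>(c::'k). \<forall>Q. c \<noteq> 0 \<longrightarrow> Q \<in> carrier A \<longrightarrow>
      h (scal c ` Q) = scal c ` h Q}"

end

theory Submission
  imports Defs
begin

lemma Sstep_iff: "(x,y) \<in> Sstep n \<longleftrightarrow> (\<exists>u v i j. u \<in> lists {..<n} \<and> v \<in> lists {..<n} \<and>
   x = u @ rotate i (zword n) @ v \<and> y = u @ rotate j (zword n) @ v)"
  unfolding Sstep_def by blast

lemma rot_lists: "rotate i (zword n) \<in> lists {..<n}"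
  by (auto simp: zword_def)

lemma Sstep_lists: "(x,y) \<in> Sstep n \<Longrightarrow> x \<in> lists {..<n} \<and> y \<in> lists {..<n}"
  unfolding Sstep_iff using rot_lists by (metis append_in_lists_conv)

lemma Sstep_sym: "(x,y) \<in> Sstep n \<Longrightarrow> (y,x) \<in> Sstep n"
  unfolding Sstep_iff by metis

lemma Sstep_conv: "(Sstep n)\<inverse> = Sstep n"
  using Sstep_sym by auto

lemma trancl_lists: "(x,y) \<in> (Sstep n)\<^sup>+ \<Longrightarrow> x \<in> lists {..<n} \<and> y \<in> lists {..<n}"
  by (induction rule: trancl_induct) (simp_all add: Sstep_lists)


lemma Scong_lists: "(x,y) \<in> Scong n \<Longrightarrow> x \<in> lists {..<n} \<and> y \<in> lists {..<n}"
  unfolding Scong_def using trancl_lists[of x y n] by (auto simp del: in_lists_conv_set)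

lemma Scong_refl: "x \<in> lists {..<n} \<Longrightarrow> (x,x) \<in> Scong n"
  unfolding Scong_def by auto

lemma Scong_sym: "(x,y) \<in> Scong n \<Longrightarrow> (y,x) \<in> Scong n"
proof -
  assume a: "(x,y) \<in> Scong n"
  have "((Sstep n)\<^sup>+)\<inverse> = (Sstep n)\<^sup>+"
    by (metis Sstep_conv trancl_converse)
  then show ?thesis using a unfolding Scong_def by (auto simp: Id_on_def)
qed

lemma Scong_trans: "(x,y) \<in> Scong n \<Longrightarrow> (y,w) \<in> Scong n \<Longrightarrow> (x,w) \<in> Scong n"
proof -
  assume a: "(x,y) \<in> Scong n" and b: "(y,w) \<in> Scong n"
  show ?thesis
  proof (cases "x = y")
    case True then show ?thesis using b by simp
  next
    case False
    then have xy: "(x,y) \<in> (Sstep n)\<^sup>+" using a unfolding Scong_def Id_on_def by blast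
    show ?thesis
    proof (cases "y = w")
      case True then show ?thesis using a by simp
    next
      case False
      then have "(y,w) \<in> (Sstep n)\<^sup>+" using b unfolding Scong_def Id_on_def by blast
      then show ?thesis using xy unfolding Scong_def by (meson UnI2 trancl_trans)
    qed
  qed
qed

lemma Sstep_ctx: "(x,y) \<in> Sstep n \<Longrightarrow> u \<in> lists {..<n} \<Longrightarrow> v \<in> lists {..<n}
   \<Longrightarrow> (u@x@v, u@y@v) \<in> Sstep n"
proof -
  assume "(x,y) \<in> Sstep n" "u \<in> lists {..<n}" "v \<in> lists {..<n}"
  then obtain u' v' i j where "x = u' @ rotate i (zword n) @ v'" "y = u' @ rotate j (zword n) @ v'"
    "u' \<in> lists {..<n}" "v' \<in> lists {..<n}" unfolding Sstep_iff by (elim exE conjE) 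
  moreover have "(((u@u') @ rotate i (zword n) @ (v'@v)), ((u@u') @ rotate j (zword n) @ (v'@v))) \<in> Sstep n"
    unfolding Sstep_iff apply (rule exI[of _ "u@u'"], rule exI[of _ "v'@v"], rule exI[of _ i], rule exI[of _ j])
    using calculation \<open>u \<in> _\<close> \<open>v \<in> _\<close> by (simp del: in_lists_conv_set)
  ultimately show ?thesis by simp
qed


lemma Scong_ctx: "(x,y) \<in> Scong n \<Longrightarrow> u \<in> lists {..<n} \<Longrightarrow> v \<in> lists {..<n}
   \<Longrightarrow> (u@x@v, u@y@v) \<in> Scong n"
proof -
  assume a: "(x,y) \<in> Scong n" and u: "u \<in> lists {..<n}" and v: "v \<in> lists {..<n}"
  have "(x,y) \<in> (Sstep n)\<^sup>+ \<Longrightarrow> (u@x@v, u@y@v) \<in> (Sstep n)\<^sup>+"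
  proof (induction rule: trancl_induct)
    case (base y) then show ?case using Sstep_ctx u v by (meson r_into_trancl)
  next
    case (step y w) then show ?case using Sstep_ctx[OF step(2) u v] by (meson trancl_into_trancl)
  qed
  moreover have "x = y \<Longrightarrow> ?thesis" using a u v Scong_lists[OF a] Scong_refl
    by (metis append_in_lists_conv)
  ultimately show ?thesis using a unfolding Scong_def Id_on_def by blast
qed

lemma Sstep_rot: "u \<in> lists {..<n} \<Longrightarrow> v \<in> lists {..<n} \<Longrightarrow>
   (u @ rotate i (zword n) @ v, u @ rotate j (zword n) @ v) \<in> Sstep n"
  unfolding Sstep_iff by blast

definition hasrot :: "nat \<Rightarrow> nat list \<Rightarrow> bool" where
  "hasrot n w = (\<exists>u v i. u \<in> lists {..<n} \<and> v \<in> lists {..<n} \<and> w = u @ rotate i (zword n) @ v)"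

lemma Sstep_hasrot: "(x,y) \<in> Sstep n \<Longrightarrow> hasrot n x \<and> hasrot n y"
  unfolding Sstep_iff hasrot_def by blast

lemma trancl_hasrot: "(x,y) \<in> (Sstep n)\<^sup>+ \<Longrightarrow> hasrot n x \<and> hasrot n y"
proof -
  assume a: "(x,y) \<in> (Sstep n)\<^sup>+"
  obtain x' where "(x,x') \<in> Sstep n" using a by (meson converse_tranclE)
  moreover obtain y' where "(y',y) \<in> Sstep n" using a by (meson tranclE)
  ultimately show ?thesis using Sstep_hasrot by blast
qed

lemma spi_self: "w \<in> lists {..<n} \<Longrightarrow> w \<in> spi n w"
  unfolding spi_def using Scong_refl by auto

lemma spi_sub: "spi n w \<subseteq> lists {..<n}"
  unfolding spi_def using Scong_lists[of w _ n] by auto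

lemma spi_eq_iff: "x \<in> lists {..<n} \<Longrightarrow> y \<in> lists {..<n} \<Longrightarrow> spi n x = spi n y \<longleftrightarrow> (x,y) \<in> Scong n"
proof
  assume "x \<in> lists {..<n}" "y \<in> lists {..<n}" "spi n x = spi n y"
  then show "(x,y) \<in> Scong n" using spi_self[of y n] unfolding spi_def by (metis Image_singleton_iff)
next
  assume "(x,y) \<in> Scong n"
  then have "(y,x) \<in> Scong n" by (rule Scong_sym)
  then show "spi n x = spi n y" unfolding spi_def
    using \<open>(x,y) \<in> Scong n\<close> Scong_trans[of x y n] Scong_trans[of y x n] by blast
qed

lemma S_mult: "x \<in> lists {..<n} \<Longrightarrow> y \<in> lists {..<n} \<Longrightarrow> spi n x \<otimes>\<^bsub>S n\<^esub> spi n y = spi n (x@y)"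
proof -
  assume x: "x \<in> lists {..<n}" and y: "y \<in> lists {..<n}"
  let ?A = "{u @ v |u v. u \<in> spi n x \<and> v \<in> spi n y}"
  have 1: "x@y \<in> ?A" using spi_self[OF x] spi_self[OF y] by blast
  have 2: "(x@y, t) \<in> Scong n" if tA: "t \<in> ?A" for t
  proof -
    obtain u v where t: "t = u@v" "u \<in> spi n x" "v \<in> spi n y"
      using tA by blast
    have t2: "(x,u) \<in> Scong n" "(y,v) \<in> Scong n" using t(2,3) unfolding spi_def by simp_all
    have u: "u \<in> lists {..<n}" using Scong_lists[OF t2(1)] by simp
    have "([]@x@y, []@u@y) \<in> Scong n" using Scong_ctx[OF t2(1), of "[]" y] y by simp
    moreover have "(u@y@[], u@v@[]) \<in> Scong n" using Scong_ctx[OF t2(2) u, of "[]"] by simp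
    ultimately show ?thesis using t Scong_trans[of "x@y" "u@y" n "u@v"] by simp
  qed
  have "Scong n `` ?A = Scong n `` {x@y}"
  proof
    show "Scong n `` ?A \<subseteq> Scong n `` {x@y}"
    proof
      fix s assume "s \<in> Scong n `` ?A"
      then obtain t where "t \<in> ?A" "(t,s) \<in> Scong n" by (meson ImageE)
      then show "s \<in> Scong n `` {x@y}" using 2 Scong_trans[of "x@y" t n s] by simp
    qed
    show "Scong n `` {x@y} \<subseteq> Scong n `` ?A" using 1 by (meson Image_mono empty_subsetI insert_subset subsetI)
  qed
  then show ?thesis unfolding S_def spi_def by simp
qed


lemma z_lists: "zword n \<in> lists {..<n}"
  using rot_lists[of 0 n] by simp

lemma rot_hd: "c < n \<Longrightarrow> rotate c (zword n) = c # tl (rotate c (zword n))"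
proof -
  assume c: "c < n"
  have "rotate c (zword n) ! 0 = c" using c by (simp add: nth_rotate zword_def)
  moreover have "rotate c (zword n) \<noteq> []" using c by (simp add: zword_def)
  ultimately show ?thesis by (metis hd_Cons_tl hd_conv_nth)
qed

lemma rot_step: "c < n \<Longrightarrow> rotate c (zword n) @ [c] = [c] @ rotate (Suc c) (zword n)"
proof -
  assume c: "c < n"
  have "rotate (Suc c) (zword n) = rotate1 (rotate c (zword n))" by simp
  also have "\<dots> = tl (rotate c (zword n)) @ [c]" by (subst rot_hd[OF c]) simp
  finally show ?thesis by (subst rot_hd[OF c]) simp
qed

lemma letter_comm: "c < n \<Longrightarrow> (zword n @ [c], [c] @ zword n) \<in> Scong n"
proof -
  assume c: "c < n"
  have cl: "[c] \<in> lists {..<n}" using c by simp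
  have 1: "([] @ rotate 0 (zword n) @ [c], [] @ rotate c (zword n) @ [c]) \<in> Sstep n"
    using Sstep_rot[of "[]" n "[c]" 0 c] cl by simp
  have 2: "([c] @ rotate (Suc c) (zword n) @ [], [c] @ rotate 0 (zword n) @ []) \<in> Sstep n"
    using Sstep_rot[of "[c]" n "[]" "Suc c" 0] cl by (simp del: rotate_Suc)
  have "(zword n @ [c], [c] @ zword n) \<in> (Sstep n)\<^sup>+"
    using 1 2 rot_step[OF c] by simp
  then show ?thesis unfolding Scong_def by blast
qed

lemma comm: "w \<in> lists {..<n} \<Longrightarrow> (zword n @ w, w @ zword n) \<in> Scong n"
proof (induction w)
  case Nil then show ?case using Scong_refl z_lists by simp
next
  case (Cons c w)
  have c: "c < n" "w \<in> lists {..<n}" using Cons.prems by auto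
  have "([] @ (zword n @ [c]) @ w, [] @ ([c] @ zword n) @ w) \<in> Scong n"
    using Scong_ctx[OF letter_comm[OF c(1)], of "[]" w] c by simp
  moreover have "([c] @ (zword n @ w) @ [], [c] @ (w @ zword n) @ []) \<in> Scong n"
    using Scong_ctx[OF Cons.IH[OF c(2)], of "[c]" "[]"] c by simp
  ultimately show ?case using Scong_trans[of "zword n @ c # w" "c # zword n @ w" n] by simp
qed

lemma hasrot_P: "hasrot n w \<Longrightarrow> \<exists>u. u \<in> lists {..<n} \<and> (zword n @ u, w) \<in> Scong n"
proof -
  assume "hasrot n w"
  then obtain u v i where uv: "u \<in> lists {..<n}" "v \<in> lists {..<n}" "w = u @ rotate i (zword n) @ v"
    unfolding hasrot_def by blast
  have 1: "(u @ rotate 0 (zword n) @ v, u @ rotate i (zword n) @ v) \<in> Scong n"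
    using Sstep_rot[OF uv(1,2)] unfolding Scong_def by blast
  have 2: "([] @ (zword n @ u) @ v, [] @ (u @ zword n) @ v) \<in> Scong n"
    using Scong_ctx[OF comm[OF uv(1)], of "[]" v] uv by simp
  have "(zword n @ (u @ v), w) \<in> Scong n" using 1 2 uv(3) Scong_trans[of "zword n @ u @ v" "u @ zword n @ v" n w] by simp
  moreover have "u @ v \<in> lists {..<n}" using uv by simp
  ultimately show ?thesis by blast
qed

lemma P_hasrot: "(zword n @ u, w) \<in> Scong n \<Longrightarrow> hasrot n w"
proof -
  assume a: "(zword n @ u, w) \<in> Scong n"
  have ul: "u \<in> lists {..<n}" using Scong_lists[OF a] by simp
  show ?thesis
  proof (cases "w = zword n @ u")
    case True then show ?thesis unfolding hasrot_def using ul
      by (rule_tac x="[]" in exI, rule_tac x=u in exI, rule_tac x=0 in exI) simp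
  next
    case False then have "(zword n @ u, w) \<in> (Sstep n)\<^sup>+" using a unfolding Scong_def Id_on_def by blast
    then show ?thesis using trancl_hasrot by blast
  qed
qed

lemma nohasrot_spi: "w \<in> lists {..<n} \<Longrightarrow> \<not> hasrot n w \<Longrightarrow> spi n w = {w}"
proof -
  assume w: "w \<in> lists {..<n}" "\<not> hasrot n w"
  have "y = w" if "(w,y) \<in> Scong n" for y
  proof (rule ccontr)
    assume "y \<noteq> w"
    then have "(w,y) \<in> (Sstep n)\<^sup>+" using that unfolding Scong_def Id_on_def by blast
    then show False using trancl_hasrot w(2) by blast
  qed
  then show ?thesis using spi_self[OF w(1)] unfolding spi_def by blast
qed

lemma hasrot_two: "n \<ge> 2 \<Longrightarrow> hasrot n w \<Longrightarrow> \<exists>w'. w' \<noteq> w \<and> w' \<in> spi n w"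
proof -
  assume n: "n \<ge> 2" and "hasrot n w"
  then obtain u v i where uv: "u \<in> lists {..<n}" "v \<in> lists {..<n}" "w = u @ rotate i (zword n) @ v"
    unfolding hasrot_def by blast
  let ?w' = "u @ rotate (Suc i) (zword n) @ v"
  have "(w, ?w') \<in> Sstep n" using Sstep_rot[OF uv(1,2)] uv(3) by blast
  then have 1: "?w' \<in> spi n w" unfolding spi_def Scong_def by blast
  have r: "rotate k (zword n) ! 0 = k mod n" for k using n by (simp add: nth_rotate zword_def)
  have "w ! length u = i mod n" using uv(3) r n by (simp add: nth_append zword_def)
  moreover have "?w' ! length u = Suc i mod n" using r[of "Suc i"] n by (simp add: nth_append zword_def del: rotate_Suc)
  moreover have "i mod n \<noteq> Suc i mod n" using n by (simp add: mod_Suc)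
  ultimately have "?w' \<noteq> w" by metis
  then show ?thesis using 1 by blast
qed



lemma alg_carrier: "f \<in> carrier (monoid_alg M :: ('a \<Rightarrow> 'k::field) ring) \<longleftrightarrow>
   finite {x. f x \<noteq> 0} \<and> (\<forall>x. x \<notin> carrier M \<longrightarrow> f x = 0)"
  by (simp add: monoid_alg_def)

lemma alg_add: "f \<oplus>\<^bsub>(monoid_alg M :: ('a \<Rightarrow> 'k::field) ring)\<^esub> g = (\<lambda>x. f x + g x)"
  by (simp add: monoid_alg_def)

lemma alg_add_closed: "f \<in> carrier (monoid_alg M :: ('a \<Rightarrow> 'k::field) ring) \<Longrightarrow> g \<in> carrier (monoid_alg M)
   \<Longrightarrow> (\<lambda>x. f x + g x) \<in> carrier (monoid_alg M)"
proof -
  assume f: "f \<in> carrier (monoid_alg M :: ('a \<Rightarrow> 'k::field) ring)" and g: "g \<in> carrier (monoid_alg M)"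
  have "{x. f x + g x \<noteq> 0} \<subseteq> {x. f x \<noteq> 0} \<union> {x. g x \<noteq> 0}" by auto
  then show ?thesis using f g unfolding alg_carrier by (auto intro: finite_subset)
qed

lemma alg_diff_closed: "f \<in> carrier (monoid_alg M :: ('a \<Rightarrow> 'k::field) ring) \<Longrightarrow> g \<in> carrier (monoid_alg M)
   \<Longrightarrow> (\<lambda>x. f x - g x) \<in> carrier (monoid_alg M)"
proof -
  assume f: "f \<in> carrier (monoid_alg M :: ('a \<Rightarrow> 'k::field) ring)" and g: "g \<in> carrier (monoid_alg M)"
  have "{x. f x - g x \<noteq> 0} \<subseteq> {x. f x \<noteq> 0} \<union> {x. g x \<noteq> 0}" by auto
  then show ?thesis using f g unfolding alg_carrier by (auto intro: finite_subset)
qed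

lemma alg_scal_closed: "f \<in> carrier (monoid_alg M :: ('a \<Rightarrow> 'k::field) ring)
   \<Longrightarrow> scal c f \<in> carrier (monoid_alg M)"
proof -
  assume f: "f \<in> carrier (monoid_alg M :: ('a \<Rightarrow> 'k::field) ring)"
  have "{x. c * f x \<noteq> 0} \<subseteq> {x. f x \<noteq> 0}" by auto
  then show ?thesis using f unfolding alg_carrier scal_def by (auto intro: finite_subset)
qed

lemma coset_eq: "a_r_coset (monoid_alg M :: ('a \<Rightarrow> 'k::field) ring) J f = {(\<lambda>x. h x + f x) | h. h \<in> J}"
  unfolding a_r_coset_def r_coset_def by (auto simp: monoid_alg_def)

lemma setadd_eq: "set_add (monoid_alg M :: ('a \<Rightarrow> 'k::field) ring) U V = {(\<lambda>x. f x + g x) | f g. f \<in> U \<and> g \<in> V}"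
  unfolding set_add_def set_mult_def by (auto simp: monoid_alg_def)

locale qiso =
  fixes M :: "('a, 'b) monoid_scheme" and N :: "('c, 'd) monoid_scheme"
    and psi :: "('c \<Rightarrow> 'k::field) \<Rightarrow> ('a \<Rightarrow> 'k)" and P :: "'a set" and I :: "'c set"
  assumes psi_car: "g \<in> carrier (monoid_alg N) \<Longrightarrow> psi g \<in> carrier (monoid_alg M)"
    and psi_add: "g1 \<in> carrier (monoid_alg N) \<Longrightarrow> g2 \<in> carrier (monoid_alg N) \<Longrightarrow>
        psi (\<lambda>x. g1 x + g2 x) = (\<lambda>y. psi g1 y + psi g2 y)"
    and psi_diff: "g1 \<in> carrier (monoid_alg N) \<Longrightarrow> g2 \<in> carrier (monoid_alg N) \<Longrightarrow>
        psi (\<lambda>x. g1 x - g2 x) = (\<lambda>y. psi g1 y - psi g2 y)"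
    and psi_scal: "g \<in> carrier (monoid_alg N) \<Longrightarrow> psi (scal c g) = scal c (psi g)"
    and mult_closed: "g1 \<in> carrier (monoid_alg N) \<Longrightarrow> g2 \<in> carrier (monoid_alg N) \<Longrightarrow>
        g1 \<otimes>\<^bsub>monoid_alg N\<^esub> g2 \<in> carrier (monoid_alg N)"
    and psi_mult: "g1 \<in> carrier (monoid_alg N) \<Longrightarrow> g2 \<in> carrier (monoid_alg N) \<Longrightarrow>
        psi (g1 \<otimes>\<^bsub>monoid_alg N\<^esub> g2) = psi g1 \<otimes>\<^bsub>monoid_alg M\<^esub> psi g2"
    and one_car: "\<one>\<^bsub>monoid_alg N\<^esub> \<in> carrier (monoid_alg N :: ('c \<Rightarrow> 'k) ring)"
    and psi_one: "psi \<one>\<^bsub>monoid_alg N\<^esub> = \<one>\<^bsub>monoid_alg M\<^esub>"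
    and psi_surj: "f \<in> carrier (monoid_alg M) \<Longrightarrow> \<exists>g \<in> carrier (monoid_alg N). psi g = f"
    and psi_ker: "g \<in> carrier (monoid_alg N) \<Longrightarrow> psi g \<in> lin_span M P \<longleftrightarrow> g \<in> lin_span N I"
begin

abbreviation "AM \<equiv> (monoid_alg M :: ('a \<Rightarrow> 'k) ring)"
abbreviation "AN \<equiv> (monoid_alg N :: ('c \<Rightarrow> 'k) ring)"

definition hh :: "('a \<Rightarrow> 'k) set \<Rightarrow> ('c \<Rightarrow> 'k) set" where
  "hh U = {g \<in> carrier (AN). psi g \<in> U}"

lemma JB_car: "lin_span N I \<subseteq> carrier (AN :: ('c \<Rightarrow> 'k) ring)"
  unfolding lin_span_def by auto

lemma JA_car: "lin_span M P \<subseteq> carrier (AM :: ('a \<Rightarrow> 'k) ring)"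
  unfolding lin_span_def by auto

lemma CL: "g0 \<in> carrier (AN) \<Longrightarrow>
   hh (a_r_coset (AM) (lin_span M P) (psi g0)) = a_r_coset (AN) (lin_span N I) g0"
proof
  assume g0: "g0 \<in> carrier (AN)"
  show "hh (a_r_coset (AM) (lin_span M P) (psi g0)) \<subseteq> a_r_coset (AN) (lin_span N I) g0"
  proof
    fix g assume "g \<in> hh (a_r_coset (AM) (lin_span M P) (psi g0))"
    then obtain p where g: "g \<in> carrier (AN)" "p \<in> lin_span M P" "psi g = (\<lambda>x. p x + psi g0 x)"
      unfolding hh_def coset_eq by blast
    define d where "d = (\<lambda>x. g x - g0 x)"
    have d: "d \<in> carrier (AN)" unfolding d_def using alg_diff_closed g g0 by blast
    have "psi d = p" unfolding d_def using psi_diff[OF g(1) g0] g(3) by auto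
    then have "d \<in> lin_span N I" using psi_ker[OF d] g(2) by simp
    moreover have "g = (\<lambda>x. d x + g0 x)" unfolding d_def by simp
    ultimately show "g \<in> a_r_coset (AN) (lin_span N I) g0" unfolding coset_eq by blast
  qed
  show "a_r_coset (AN) (lin_span N I) g0 \<subseteq> hh (a_r_coset (AM) (lin_span M P) (psi g0))"
  proof
    fix g assume "g \<in> a_r_coset (AN) (lin_span N I) g0"
    then obtain k where k: "k \<in> lin_span N I" "g = (\<lambda>x. k x + g0 x)" unfolding coset_eq by blast
    have kc: "k \<in> carrier (AN)" using k JB_car by blast
    have gc: "g \<in> carrier (AN)" using k(2) alg_add_closed[OF kc g0] by simp
    have "psi g = (\<lambda>x. psi k x + psi g0 x)" using psi_add[OF kc g0] k(2) by simp
    moreover have "psi k \<in> lin_span M P" using psi_ker[OF kc] k(1) by simp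
    ultimately show "g \<in> hh (a_r_coset (AM) (lin_span M P) (psi g0))"
      unfolding hh_def coset_eq using gc by blast
  qed
qed

lemma psi_img: "U \<subseteq> carrier (AM) \<Longrightarrow> psi ` hh U = U"
  unfolding hh_def using psi_surj by fastforce

lemma coset_car: "f \<in> carrier (AM) \<Longrightarrow>
  a_r_coset (AM) (lin_span M P) f \<subseteq> carrier (AM :: ('a \<Rightarrow> 'k) ring)"
  unfolding coset_eq using JA_car alg_add_closed by blast

lemma carA: "U \<in> carrier (AM Quot lin_span M P) \<Longrightarrow>
   \<exists>g0 \<in> carrier (AN). U = a_r_coset (AM) (lin_span M P) (psi g0)"
  unfolding FactRing_def A_RCOSETS_def' using psi_surj by fastforce

lemma carA_sub: "U \<in> carrier (AM Quot lin_span M P) \<Longrightarrow> U \<subseteq> carrier (AM)"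
  using carA psi_car coset_car by blast

lemma carB: "g0 \<in> carrier (AN) \<Longrightarrow> a_r_coset (AN) (lin_span N I) g0 \<in> carrier (AN Quot lin_span N I)"
  unfolding FactRing_def A_RCOSETS_def' by auto

lemma carA': "g0 \<in> carrier (AN) \<Longrightarrow> a_r_coset (AM) (lin_span M P) (psi g0) \<in> carrier (AM Quot lin_span M P)"
  unfolding FactRing_def A_RCOSETS_def' using psi_car by auto

lemma carB_ex: "V \<in> carrier (AN Quot lin_span N I) \<Longrightarrow> \<exists>g0 \<in> carrier (AN). V = a_r_coset (AN) (lin_span N I) g0"
  unfolding FactRing_def A_RCOSETS_def' by auto

lemma hh_add: "U \<subseteq> carrier (AM) \<Longrightarrow> V \<subseteq> carrier (AM) \<Longrightarrow>
   hh (set_add (AM) U V) = set_add (AN) (hh U) (hh V)"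
proof
  assume U: "U \<subseteq> carrier (AM)" and V: "V \<subseteq> carrier (AM)"
  show "hh (set_add (AM) U V) \<subseteq> set_add (AN) (hh U) (hh V)"
  proof
    fix g assume "g \<in> hh (set_add (AM) U V)"
    then obtain x y where g: "g \<in> carrier (AN)" "x \<in> U" "y \<in> V" "psi g = (\<lambda>z. x z + y z)"
      unfolding hh_def setadd_eq by blast
    obtain g1 where g1: "g1 \<in> carrier (AN)" "psi g1 = x" using psi_surj g(2) U by blast
    define g2 where "g2 = (\<lambda>z. g z - g1 z)"
    have g2: "g2 \<in> carrier (AN)" unfolding g2_def using alg_diff_closed g(1) g1(1) by blast
    have "psi g2 = y" unfolding g2_def using psi_diff[OF g(1) g1(1)] g(4) g1(2) by auto
    then have "g1 \<in> hh U" "g2 \<in> hh V" using g1 g2 g unfolding hh_def by auto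
    moreover have "g = (\<lambda>z. g1 z + g2 z)" unfolding g2_def by simp
    ultimately show "g \<in> set_add (AN) (hh U) (hh V)" unfolding setadd_eq by blast
  qed
  show "set_add (AN) (hh U) (hh V) \<subseteq> hh (set_add (AM) U V)"
  proof
    fix g assume "g \<in> set_add (AN) (hh U) (hh V)"
    then obtain g1 g2 where g: "g1 \<in> hh U" "g2 \<in> hh V" "g = (\<lambda>z. g1 z + g2 z)"
      unfolding setadd_eq by blast
    have c: "g1 \<in> carrier (AN)" "g2 \<in> carrier (AN)" using g unfolding hh_def by auto
    have "psi g = (\<lambda>z. psi g1 z + psi g2 z)" using psi_add[OF c] g(3) by simp
    then show "g \<in> hh (set_add (AM) U V)" using g alg_add_closed[OF c] unfolding hh_def setadd_eq by blast
  qed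
qed

lemma hh_mult: "U \<subseteq> carrier (AM) \<Longrightarrow> V \<subseteq> carrier (AM) \<Longrightarrow>
   hh (rcoset_mult (AM) (lin_span M P) U V) = rcoset_mult (AN) (lin_span N I) (hh U) (hh V)"
proof
  assume U: "U \<subseteq> carrier (AM)" and V: "V \<subseteq> carrier (AM)"
  show "hh (rcoset_mult (AM) (lin_span M P) U V) \<subseteq> rcoset_mult (AN) (lin_span N I) (hh U) (hh V)"
  proof
    fix g assume "g \<in> hh (rcoset_mult (AM) (lin_span M P) U V)"
    then obtain x y where g: "x \<in> U" "y \<in> V"
       "g \<in> hh (a_r_coset (AM) (lin_span M P) (x \<otimes>\<^bsub>AM\<^esub> y))"
      unfolding hh_def rcoset_mult_def by blast
    obtain g1 where g1: "g1 \<in> carrier (AN)" "psi g1 = x" using psi_surj g(1) U by blast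
    obtain g2 where g2: "g2 \<in> carrier (AN)" "psi g2 = y" using psi_surj g(2) V by blast
    have "g \<in> a_r_coset (AN) (lin_span N I) (g1 \<otimes>\<^bsub>AN\<^esub> g2)"
      using g(3) CL[OF mult_closed[OF g1(1) g2(1)]] psi_mult[OF g1(1) g2(1)] g1 g2 by simp
    moreover have "g1 \<in> hh U" "g2 \<in> hh V" using g1 g2 g unfolding hh_def by auto
    ultimately show "g \<in> rcoset_mult (AN) (lin_span N I) (hh U) (hh V)"
      unfolding rcoset_mult_def by blast
  qed
  show "rcoset_mult (AN) (lin_span N I) (hh U) (hh V) \<subseteq> hh (rcoset_mult (AM) (lin_span M P) U V)"
  proof
    fix g assume "g \<in> rcoset_mult (AN) (lin_span N I) (hh U) (hh V)"
    then obtain g1 g2 where g: "g1 \<in> hh U" "g2 \<in> hh V" "g \<in> a_r_coset (AN) (lin_span N I) (g1 \<otimes>\<^bsub>AN\<^esub> g2)"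
      unfolding rcoset_mult_def by blast
    have c: "g1 \<in> carrier (AN)" "g2 \<in> carrier (AN)" "psi g1 \<in> U" "psi g2 \<in> V"
      using g unfolding hh_def by auto
    have "g \<in> hh (a_r_coset (AM) (lin_span M P) (psi g1 \<otimes>\<^bsub>AM\<^esub> psi g2))"
      using g(3) CL[OF mult_closed[OF c(1,2)]] psi_mult[OF c(1,2)] by simp
    then show "g \<in> hh (rcoset_mult (AM) (lin_span M P) U V)"
      using c unfolding hh_def rcoset_mult_def by blast
  qed
qed

lemma hh_scal: "(c::'k) \<noteq> 0 \<Longrightarrow> U \<subseteq> carrier (AM) \<Longrightarrow> hh (scal c ` U) = scal c ` hh U"
proof
  assume c: "c \<noteq> 0" and U: "U \<subseteq> carrier (AM)"
  show "hh (scal c ` U) \<subseteq> scal c ` hh U"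
  proof
    fix g assume "g \<in> hh (scal c ` U)"
    then obtain x where g: "g \<in> carrier (AN)" "x \<in> U" "psi g = scal c x" unfolding hh_def by blast
    have g': "scal (inverse c) g \<in> carrier (AN)" using alg_scal_closed g(1) by blast
    have "psi (scal (inverse c) g) = scal (inverse c) (psi g)" by (rule psi_scal[OF g(1)])
    also have "\<dots> = x" using g(3) c by (simp add: scal_def mult.assoc[symmetric])
    finally have "psi (scal (inverse c) g) = x" .
    then have "scal (inverse c) g \<in> hh U" using g' g(2) unfolding hh_def by simp
    moreover have "g = scal c (scal (inverse c) g)" using c by (simp add: scal_def mult.assoc[symmetric])
    ultimately show "g \<in> scal c ` hh U" by blast
  qed
  show "scal c ` hh U \<subseteq> hh (scal c ` U)"
  proof
    fix g assume "g \<in> scal c ` hh U"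
    then obtain g1 where g1: "g1 \<in> carrier (AN)" "psi g1 \<in> U" "g = scal c g1" unfolding hh_def by blast
    then show "g \<in> hh (scal c ` U)" using psi_scal[OF g1(1)] alg_scal_closed[OF g1(1)] unfolding hh_def by auto
  qed
qed

theorem iso: "hh \<in> alg_iso_quot (AM Quot lin_span M P) (AN Quot lin_span N I)"
proof -
  have car: "hh U \<in> carrier (AN Quot lin_span N I)" if "U \<in> carrier (AM Quot lin_span M P)" for U
    using carA[OF that] CL carB by auto
  have hom: "hh \<in> ring_hom (AM Quot lin_span M P) (AN Quot lin_span N I)"
    unfolding ring_hom_def
  proof (intro CollectI conjI allI impI)
    show "hh \<in> carrier (AM Quot lin_span M P) \<rightarrow> carrier (AN Quot lin_span N I)"
      using car by blast
    fix U V assume "U \<in> carrier (AM Quot lin_span M P) \<and> V \<in> carrier (AM Quot lin_span M P)"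
    then have XY: "U \<subseteq> carrier (AM)" "V \<subseteq> carrier (AM)" using carA_sub by auto
    show "hh (U \<otimes>\<^bsub>AM Quot lin_span M P\<^esub> V) = hh U \<otimes>\<^bsub>AN Quot lin_span N I\<^esub> hh V"
      using hh_mult[OF XY] unfolding FactRing_def by simp
    show "hh (U \<oplus>\<^bsub>AM Quot lin_span M P\<^esub> V) = hh U \<oplus>\<^bsub>AN Quot lin_span N I\<^esub> hh V"
      using hh_add[OF XY] unfolding FactRing_def by simp
  next
    show "hh \<one>\<^bsub>AM Quot lin_span M P\<^esub> = \<one>\<^bsub>AN Quot lin_span N I\<^esub>"
      using CL[OF one_car] psi_one unfolding FactRing_def by simp
  qed
  have inj: "inj_on hh (carrier (AM Quot lin_span M P))"
  proof
    fix U V assume "U \<in> carrier (AM Quot lin_span M P)" "V \<in> carrier (AM Quot lin_span M P)" "hh U = hh V"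
    then show "U = V" using psi_img carA_sub by metis
  qed
  have surj: "hh ` carrier (AM Quot lin_span M P) = carrier (AN Quot lin_span N I)"
  proof
    show "hh ` carrier (AM Quot lin_span M P) \<subseteq> carrier (AN Quot lin_span N I)" using car by blast
    show "carrier (AN Quot lin_span N I) \<subseteq> hh ` carrier (AM Quot lin_span M P)"
    proof
      fix V assume "V \<in> carrier (AN Quot lin_span N I)"
      then obtain g0 where "g0 \<in> carrier (AN)" "V = a_r_coset (AN) (lin_span N I) g0"
        using carB_ex by blast
      then show "V \<in> hh ` carrier (AM Quot lin_span M P)" using CL carA' by (metis image_eqI)
    qed
  qed
  have "hh \<in> ring_iso (AM Quot lin_span M P) (AN Quot lin_span N I)"
    unfolding ring_iso_def bij_betw_def using hom inj surj by blast
  then show ?thesis unfolding alg_iso_quot_def using hh_scal carA_sub by blast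
qed

end



definition push :: "('c \<Rightarrow> 'a) \<Rightarrow> ('c \<Rightarrow> 'k::field) \<Rightarrow> ('a \<Rightarrow> 'k)" where
  "push pr g = (\<lambda>a. \<Sum>w\<in>{w. g w \<noteq> 0}. if pr w = a then g w else 0)"

lemma push_sup: "finite F \<Longrightarrow> {w. g w \<noteq> 0} \<subseteq> F \<Longrightarrow>
   push pr g a = (\<Sum>w\<in>F. if pr w = a then g w else 0)"
  unfolding push_def by (rule sum.mono_neutral_left) auto

lemma alg_mult: "f \<otimes>\<^bsub>(monoid_alg M :: ('a \<Rightarrow> 'k::field) ring)\<^esub> g = (\<lambda>x. \<Sum>p\<in>{(a, b). a \<in> carrier M \<and> b \<in> carrier M \<and> f a \<noteq> 0 \<and> g b \<noteq> 0
                                       \<and> a \<otimes>\<^bsub>M\<^esub> b = x}. f (fst p) * g (snd p))"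
  by (simp add: monoid_alg_def)

lemma alg_one: "\<one>\<^bsub>(monoid_alg M :: ('a \<Rightarrow> 'k::field) ring)\<^esub> = (\<lambda>x. if x = \<one>\<^bsub>M\<^esub> then 1 else 0)"
  by (simp add: monoid_alg_def)

lemma conv_eq:
  assumes f: "f \<in> carrier (monoid_alg M :: ('a \<Rightarrow> 'k::field) ring)" and g: "g \<in> carrier (monoid_alg M :: ('a \<Rightarrow> 'k::field) ring)"
    and A: "finite A" "{x. f x \<noteq> 0} \<subseteq> A" and B: "finite B" "{x. g x \<noteq> 0} \<subseteq> B"
  shows "(f \<otimes>\<^bsub>monoid_alg M\<^esub> g) x = (\<Sum>p\<in>A \<times> B. if fst p \<otimes>\<^bsub>M\<^esub> snd p = x then f (fst p) * g (snd p) else 0)"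
proof -
  have D: "{(a, b). a \<in> carrier M \<and> b \<in> carrier M \<and> f a \<noteq> 0 \<and> g b \<noteq> 0 \<and> a \<otimes>\<^bsub>M\<^esub> b = x}
     = {p \<in> A \<times> B. f (fst p) \<noteq> 0 \<and> g (snd p) \<noteq> 0 \<and> fst p \<otimes>\<^bsub>M\<^esub> snd p = x}"
    using f g A B unfolding alg_carrier by auto
  have "(f \<otimes>\<^bsub>monoid_alg M\<^esub> g) x = (\<Sum>p\<in>{p \<in> A \<times> B. f (fst p) \<noteq> 0 \<and> g (snd p) \<noteq> 0 \<and> fst p \<otimes>\<^bsub>M\<^esub> snd p = x}. f (fst p) * g (snd p))"
    unfolding alg_mult D by simp
  also have "\<dots> = (\<Sum>p\<in>A \<times> B. if f (fst p) \<noteq> 0 \<and> g (snd p) \<noteq> 0 \<and> fst p \<otimes>\<^bsub>M\<^esub> snd p = x then f (fst p) * g (snd p) else 0)"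
    using A B by (simp add: sum.inter_filter)
  also have "\<dots> = (\<Sum>p\<in>A \<times> B. if fst p \<otimes>\<^bsub>M\<^esub> snd p = x then f (fst p) * g (snd p) else 0)"
    by (rule sum.cong) auto
  finally show ?thesis .
qed

lemma if_sum: "(if c then sum h T else 0) = (\<Sum>p\<in>T. if c then h p else (0::'k::comm_monoid_add))"
  by (cases c) simp_all

locale pctx =
  fixes M :: "('a, 'b) monoid_scheme" and N :: "('c, 'd) monoid_scheme"
    and pr :: "'c \<Rightarrow> 'a" and P :: "'a set"
  assumes H1: "w \<in> carrier N \<Longrightarrow> pr w \<in> carrier M"
    and H2a: "u \<in> carrier N \<Longrightarrow> v \<in> carrier N \<Longrightarrow> u \<otimes>\<^bsub>N\<^esub> v \<in> carrier N"
    and H2b: "u \<in> carrier N \<Longrightarrow> v \<in> carrier N \<Longrightarrow> pr (u \<otimes>\<^bsub>N\<^esub> v) = pr u \<otimes>\<^bsub>M\<^esub> pr v"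
    and H3a: "\<one>\<^bsub>N\<^esub> \<in> carrier N" and H3b: "pr \<one>\<^bsub>N\<^esub> = \<one>\<^bsub>M\<^esub>"
    and H4: "a \<in> carrier M \<Longrightarrow> \<exists>w \<in> carrier N. pr w = a"
    and H5: "w \<in> carrier N \<Longrightarrow> pr w \<notin> P \<Longrightarrow> w' \<in> carrier N \<Longrightarrow> pr w' = pr w \<Longrightarrow> w' = w"
begin

lemma push_nz: "push pr g a \<noteq> 0 \<Longrightarrow> \<exists>w. g w \<noteq> 0 \<and> pr w = a"
proof (rule ccontr)
  assume "push pr g a \<noteq> 0" "\<not> (\<exists>w. g w \<noteq> 0 \<and> pr w = a)"
  then have "push pr g a = 0" unfolding push_def by (intro sum.neutral) auto
  then show False using \<open>push pr g a \<noteq> 0\<close> by simp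
qed

lemma push_car: "g \<in> carrier (monoid_alg N :: ('c \<Rightarrow> 'k::field) ring) \<Longrightarrow> push pr g \<in> carrier (monoid_alg M :: ('a \<Rightarrow> 'k) ring)"
proof -
  assume g: "g \<in> carrier (monoid_alg N :: ('c \<Rightarrow> 'k::field) ring)"
  have "{a. push pr g a \<noteq> 0} \<subseteq> pr ` {w. g w \<noteq> 0}" using push_nz by blast
  then have "finite {a. push pr g a \<noteq> 0}" using g unfolding alg_carrier by (meson finite_imageI finite_subset)
  moreover have "push pr g a = 0" if "a \<notin> carrier M" for a
  proof (rule ccontr)
    assume "push pr g a \<noteq> 0"
    then obtain w where "g w \<noteq> 0" "pr w = a" using push_nz by blast
    then show False using g H1 that unfolding alg_carrier by blast
  qed
  ultimately show ?thesis unfolding alg_carrier by blast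
qed

lemma push_add: "g1 \<in> carrier (monoid_alg N :: ('c \<Rightarrow> 'k::field) ring) \<Longrightarrow> g2 \<in> carrier (monoid_alg N) \<Longrightarrow>
   push pr (\<lambda>x. g1 x + g2 x) = (\<lambda>y. push pr g1 y + push pr g2 y)"
proof
  fix y
  assume g: "g1 \<in> carrier (monoid_alg N :: ('c \<Rightarrow> 'k::field) ring)" "g2 \<in> carrier (monoid_alg N)"
  let ?F = "{w. g1 w \<noteq> 0} \<union> {w. g2 w \<noteq> 0}"
  have F: "finite ?F" using g unfolding alg_carrier by simp
  have "push pr (\<lambda>x. g1 x + g2 x) y = (\<Sum>w\<in>?F. if pr w = y then g1 w + g2 w else 0)"
    by (rule push_sup[OF F]) auto
  also have "\<dots> = (\<Sum>w\<in>?F. (if pr w = y then g1 w else 0) + (if pr w = y then g2 w else 0))"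
    by (rule sum.cong) auto
  also have "\<dots> = push pr g1 y + push pr g2 y"
    by (simp add: sum.distrib push_sup[OF F])
  finally show "push pr (\<lambda>x. g1 x + g2 x) y = push pr g1 y + push pr g2 y" .
qed

lemma push_diff: "g1 \<in> carrier (monoid_alg N :: ('c \<Rightarrow> 'k::field) ring) \<Longrightarrow> g2 \<in> carrier (monoid_alg N) \<Longrightarrow>
   push pr (\<lambda>x. g1 x - g2 x) = (\<lambda>y. push pr g1 y - push pr g2 y)"
proof
  fix y
  assume g: "g1 \<in> carrier (monoid_alg N :: ('c \<Rightarrow> 'k::field) ring)" "g2 \<in> carrier (monoid_alg N)"
  let ?F = "{w. g1 w \<noteq> 0} \<union> {w. g2 w \<noteq> 0}"
  have F: "finite ?F" using g unfolding alg_carrier by simp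
  have "push pr (\<lambda>x. g1 x - g2 x) y = (\<Sum>w\<in>?F. if pr w = y then g1 w - g2 w else 0)"
    by (rule push_sup[OF F]) auto
  also have "\<dots> = (\<Sum>w\<in>?F. (if pr w = y then g1 w else 0) - (if pr w = y then g2 w else 0))"
    by (rule sum.cong) auto
  also have "\<dots> = push pr g1 y - push pr g2 y"
    by (simp add: sum_subtractf push_sup[OF F])
  finally show "push pr (\<lambda>x. g1 x - g2 x) y = push pr g1 y - push pr g2 y" .
qed

lemma push_scal: "g \<in> carrier (monoid_alg N :: ('c \<Rightarrow> 'k::field) ring) \<Longrightarrow> push pr (scal c g) = scal c (push pr g)"
proof
  fix y
  assume g: "g \<in> carrier (monoid_alg N :: ('c \<Rightarrow> 'k::field) ring)"
  let ?F = "{w. g w \<noteq> 0}"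
  have F: "finite ?F" using g unfolding alg_carrier by simp
  have "push pr (scal c g) y = (\<Sum>w\<in>?F. if pr w = y then c * g w else 0)"
    unfolding scal_def by (rule push_sup[OF F]) auto
  also have "\<dots> = (\<Sum>w\<in>?F. c * (if pr w = y then g w else 0))"
    by (rule sum.cong) auto
  also have "\<dots> = scal c (push pr g) y"
    by (simp add: sum_distrib_left push_def scal_def)
  finally show "push pr (scal c g) y = scal c (push pr g) y" .
qed

lemma one_car: "\<one>\<^bsub>monoid_alg N\<^esub> \<in> carrier (monoid_alg N :: ('c \<Rightarrow> 'k::field) ring)"
  unfolding alg_carrier alg_one using H3a by auto

lemma push_one: "push pr (\<one>\<^bsub>monoid_alg N\<^esub>) = (\<one>\<^bsub>monoid_alg M\<^esub> :: 'a \<Rightarrow> 'k::field)"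
proof
  fix a
  have "push pr (\<one>\<^bsub>monoid_alg N\<^esub> :: 'c \<Rightarrow> 'k) a = (\<Sum>w\<in>{\<one>\<^bsub>N\<^esub>}. if pr w = a then (\<one>\<^bsub>monoid_alg N\<^esub> :: 'c \<Rightarrow> 'k) w else 0)"
    by (rule push_sup) (auto simp: alg_one)
  then show "push pr (\<one>\<^bsub>monoid_alg N\<^esub> :: 'c \<Rightarrow> 'k) a = (\<one>\<^bsub>monoid_alg M\<^esub> :: 'a \<Rightarrow> 'k) a"
    using H3b by (auto simp: alg_one)
qed

lemma mult_closed: "g1 \<in> carrier (monoid_alg N :: ('c \<Rightarrow> 'k::field) ring) \<Longrightarrow> g2 \<in> carrier (monoid_alg N) \<Longrightarrow>
        g1 \<otimes>\<^bsub>monoid_alg N\<^esub> g2 \<in> carrier (monoid_alg N)"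
proof -
  assume g: "g1 \<in> carrier (monoid_alg N :: ('c \<Rightarrow> 'k::field) ring)" "g2 \<in> carrier (monoid_alg N)"
  let ?S1 = "{w. g1 w \<noteq> 0}" and ?S2 = "{w. g2 w \<noteq> 0}"
  have nz: "\<exists>p \<in> ?S1 \<times> ?S2. fst p \<otimes>\<^bsub>N\<^esub> snd p = x" if "(g1 \<otimes>\<^bsub>monoid_alg N\<^esub> g2) x \<noteq> 0" for x
  proof (rule ccontr)
    assume "\<not> ?thesis"
    then show False using that unfolding alg_mult by (auto intro!: sum.neutral)
  qed
  have "{x. (g1 \<otimes>\<^bsub>monoid_alg N\<^esub> g2) x \<noteq> 0} \<subseteq> (\<lambda>p. fst p \<otimes>\<^bsub>N\<^esub> snd p) ` (?S1 \<times> ?S2)"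
    using nz by blast
  moreover have "finite (?S1 \<times> ?S2)" using g unfolding alg_carrier by simp
  ultimately have "finite {x. (g1 \<otimes>\<^bsub>monoid_alg N\<^esub> g2) x \<noteq> 0}" by (meson finite_imageI finite_subset)
  moreover have "(g1 \<otimes>\<^bsub>monoid_alg N\<^esub> g2) x = 0" if "x \<notin> carrier N" for x
  proof (rule ccontr)
    assume "(g1 \<otimes>\<^bsub>monoid_alg N\<^esub> g2) x \<noteq> 0"
    then obtain p where "p \<in> ?S1 \<times> ?S2" "fst p \<otimes>\<^bsub>N\<^esub> snd p = x" using nz by blast
    then show False using g H2a that unfolding alg_carrier by force
  qed
  ultimately show ?thesis unfolding alg_carrier by blast
qed


lemma prod_push: "g1 \<in> carrier (monoid_alg N :: ('c \<Rightarrow> 'k::field) ring) \<Longrightarrow> g2 \<in> carrier (monoid_alg N) \<Longrightarrow>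
  push pr g1 q1 * push pr g2 q2 = (\<Sum>p\<in>{w. g1 w \<noteq> 0} \<times> {w. g2 w \<noteq> 0}.
     if (pr (fst p), pr (snd p)) = (q1, q2) then g1 (fst p) * g2 (snd p) else 0)"
proof -
  have "push pr g1 q1 * push pr g2 q2 = (\<Sum>u\<in>{w. g1 w \<noteq> 0}. \<Sum>v\<in>{w. g2 w \<noteq> 0}.
      (if pr u = q1 then g1 u else 0) * (if pr v = q2 then g2 v else 0))"
    unfolding push_def by (rule sum_product)
  also have "\<dots> = (\<Sum>p\<in>{w. g1 w \<noteq> 0} \<times> {w. g2 w \<noteq> 0}.
      (if pr (fst p) = q1 then g1 (fst p) else 0) * (if pr (snd p) = q2 then g2 (snd p) else 0))"
    by (simp add: sum.cartesian_product case_prod_beta)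
  also have "\<dots> = (\<Sum>p\<in>{w. g1 w \<noteq> 0} \<times> {w. g2 w \<noteq> 0}.
     if (pr (fst p), pr (snd p)) = (q1, q2) then g1 (fst p) * g2 (snd p) else 0)"
    by (rule sum.cong) auto
  finally show ?thesis .
qed

lemma push_mult: "g1 \<in> carrier (monoid_alg N :: ('c \<Rightarrow> 'k::field) ring) \<Longrightarrow> g2 \<in> carrier (monoid_alg N) \<Longrightarrow>
        push pr (g1 \<otimes>\<^bsub>monoid_alg N\<^esub> g2) = push pr g1 \<otimes>\<^bsub>monoid_alg M\<^esub> push pr g2"
proof
  fix a
  assume g: "g1 \<in> carrier (monoid_alg N :: ('c \<Rightarrow> 'k::field) ring)" "g2 \<in> carrier (monoid_alg N)"
  let ?S1 = "{w. g1 w \<noteq> 0}" and ?S2 = "{w. g2 w \<noteq> 0}"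
  let ?S = "?S1 \<times> ?S2"
  let ?F = "(\<lambda>p. fst p \<otimes>\<^bsub>N\<^esub> snd p) ` ?S"
  let ?h = "\<lambda>p. if pr (fst p \<otimes>\<^bsub>N\<^esub> snd p) = a then g1 (fst p) * g2 (snd p) else 0"
  have fS1: "finite ?S1" and fS2: "finite ?S2" using g unfolding alg_carrier by auto
  have fS: "finite ?S" using fS1 fS2 by simp
  have fF: "finite ?F" using fS by simp
  have sc: "?S1 \<subseteq> carrier N" "?S2 \<subseteq> carrier N" using g unfolding alg_carrier by auto
  have cv: "(g1 \<otimes>\<^bsub>monoid_alg N\<^esub> g2) w = (\<Sum>p\<in>?S. if fst p \<otimes>\<^bsub>N\<^esub> snd p = w then g1 (fst p) * g2 (snd p) else 0)" for w
    by (rule conv_eq[OF g fS1 _ fS2]) auto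
  have supF: "{w. (g1 \<otimes>\<^bsub>monoid_alg N\<^esub> g2) w \<noteq> 0} \<subseteq> ?F"
  proof
    fix w assume "w \<in> {w. (g1 \<otimes>\<^bsub>monoid_alg N\<^esub> g2) w \<noteq> 0}"
    then have "(\<Sum>p\<in>?S. if fst p \<otimes>\<^bsub>N\<^esub> snd p = w then g1 (fst p) * g2 (snd p) else 0) \<noteq> 0" using cv by simp
    then have "\<exists>p \<in> ?S. fst p \<otimes>\<^bsub>N\<^esub> snd p = w"
    proof (rule contrapos_pp)
      assume "\<not> (\<exists>p \<in> ?S. fst p \<otimes>\<^bsub>N\<^esub> snd p = w)"
      then have "\<forall>p\<in>?S. (if fst p \<otimes>\<^bsub>N\<^esub> snd p = w then g1 (fst p) * g2 (snd p) else 0) = 0" by auto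
      then have "(\<Sum>p\<in>?S. if fst p \<otimes>\<^bsub>N\<^esub> snd p = w then g1 (fst p) * g2 (snd p) else 0) = 0"
        by (rule sum.neutral)
      then show "\<not> (\<Sum>p\<in>?S. if fst p \<otimes>\<^bsub>N\<^esub> snd p = w then g1 (fst p) * g2 (snd p) else 0) \<noteq> 0"
        by simp
    qed
    then show "w \<in> ?F" by blast
  qed
  have "push pr (g1 \<otimes>\<^bsub>monoid_alg N\<^esub> g2) a = (\<Sum>w\<in>?F. if pr w = a then (g1 \<otimes>\<^bsub>monoid_alg N\<^esub> g2) w else 0)"
    by (rule push_sup[OF fF supF])
  also have "\<dots> = (\<Sum>w\<in>?F. \<Sum>p\<in>?S. if w = fst p \<otimes>\<^bsub>N\<^esub> snd p then (if pr w = a then g1 (fst p) * g2 (snd p) else 0) else 0)"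
    unfolding cv if_sum by (intro sum.cong refl) auto
  also have "\<dots> = (\<Sum>p\<in>?S. \<Sum>w\<in>?F. if w = fst p \<otimes>\<^bsub>N\<^esub> snd p then (if pr w = a then g1 (fst p) * g2 (snd p) else 0) else 0)"
    by (rule sum.swap)
  also have "\<dots> = (\<Sum>p\<in>?S. ?h p)"
    using fF by (intro sum.cong refl) auto
  finally have L: "push pr (g1 \<otimes>\<^bsub>monoid_alg N\<^esub> g2) a = (\<Sum>p\<in>?S. ?h p)" .
  let ?T1 = "pr ` ?S1" and ?T2 = "pr ` ?S2"
  have fT: "finite ?T1" "finite ?T2" using fS1 fS2 by auto
  have sT1: "{x. push pr g1 x \<noteq> 0} \<subseteq> ?T1" using push_nz by blast
  have sT2: "{x. push pr g2 x \<noteq> 0} \<subseteq> ?T2" using push_nz by blast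
  have "(push pr g1 \<otimes>\<^bsub>monoid_alg M\<^esub> push pr g2) a = (\<Sum>q\<in>?T1 \<times> ?T2. if fst q \<otimes>\<^bsub>M\<^esub> snd q = a then push pr g1 (fst q) * push pr g2 (snd q) else 0)"
    by (rule conv_eq[OF push_car[OF g(1)] push_car[OF g(2)] fT(1) sT1 fT(2) sT2])
  also have "\<dots> = (\<Sum>q\<in>?T1 \<times> ?T2. \<Sum>p\<in>?S. if q = (pr (fst p), pr (snd p)) then (if fst q \<otimes>\<^bsub>M\<^esub> snd q = a then g1 (fst p) * g2 (snd p) else 0) else 0)"
    unfolding prod_push[OF g] if_sum by (intro sum.cong refl) auto
  also have "\<dots> = (\<Sum>p\<in>?S. \<Sum>q\<in>?T1 \<times> ?T2. if q = (pr (fst p), pr (snd p)) then (if fst q \<otimes>\<^bsub>M\<^esub> snd q = a then g1 (fst p) * g2 (snd p) else 0) else 0)"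
    by (rule sum.swap)
  also have "\<dots> = (\<Sum>p\<in>?S. ?h p)"
  proof (intro sum.cong refl)
    fix p assume p: "p \<in> ?S"
    then have "(pr (fst p), pr (snd p)) \<in> ?T1 \<times> ?T2" by auto
    moreover have "pr (fst p \<otimes>\<^bsub>N\<^esub> snd p) = pr (fst p) \<otimes>\<^bsub>M\<^esub> pr (snd p)" using p sc H2b by (simp add: mem_Times_iff subset_eq)
    ultimately show "(\<Sum>q\<in>?T1 \<times> ?T2. if q = (pr (fst p), pr (snd p)) then (if fst q \<otimes>\<^bsub>M\<^esub> snd q = a then g1 (fst p) * g2 (snd p) else 0) else 0) = ?h p"
      using fT by simp
  qed
  finally show "push pr (g1 \<otimes>\<^bsub>monoid_alg N\<^esub> g2) a = (push pr g1 \<otimes>\<^bsub>monoid_alg M\<^esub> push pr g2) a"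
    using L by simp
qed


lemma push_single: "g \<in> carrier (monoid_alg N :: ('c \<Rightarrow> 'k::field) ring) \<Longrightarrow> w \<in> carrier N \<Longrightarrow> pr w \<notin> P \<Longrightarrow>
  push pr g (pr w) = g w"
proof -
  assume g: "g \<in> carrier (monoid_alg N :: ('c \<Rightarrow> 'k::field) ring)" and w: "w \<in> carrier N" "pr w \<notin> P"
  let ?F = "insert w {w. g w \<noteq> 0}"
  have F: "finite ?F" and Fc: "?F \<subseteq> carrier N" using g w unfolding alg_carrier by auto
  have "push pr g (pr w) = (\<Sum>w'\<in>?F. if pr w' = pr w then g w' else 0)"
    by (rule push_sup[OF F]) auto
  also have "\<dots> = (\<Sum>w'\<in>?F. if w' = w then g w' else 0)"
  proof (intro sum.cong refl)
    fix w' assume "w' \<in> ?F"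
    then have "w' \<in> carrier N" using Fc by blast
    then show "(if pr w' = pr w then g w' else 0) = (if w' = w then g w' else 0)"
      using H5[OF w] by auto
  qed
  also have "\<dots> = g w" using F by simp
  finally show ?thesis .
qed

lemma push_ker: "g \<in> carrier (monoid_alg N :: ('c \<Rightarrow> 'k::field) ring) \<Longrightarrow>
   push pr g \<in> lin_span M P \<longleftrightarrow> g \<in> lin_span N {w \<in> carrier N. pr w \<in> P}"
proof
  assume g: "g \<in> carrier (monoid_alg N :: ('c \<Rightarrow> 'k::field) ring)"
  {
    assume a: "push pr g \<in> lin_span M P"
    have "w \<in> {w \<in> carrier N. pr w \<in> P}" if "g w \<noteq> 0" for w
    proof -
      have wc: "w \<in> carrier N" using g that unfolding alg_carrier by blast
      show ?thesis
      proof (rule ccontr)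
        assume "w \<notin> {w \<in> carrier N. pr w \<in> P}"
        then have "pr w \<notin> P" using wc by blast
        then have "push pr g (pr w) \<noteq> 0" using push_single[OF g wc] that by simp
        then show False using a \<open>pr w \<notin> P\<close> unfolding lin_span_def by blast
      qed
    qed
    then show "g \<in> lin_span N {w \<in> carrier N. pr w \<in> P}" using g unfolding lin_span_def by blast
  }
  {
    assume a: "g \<in> lin_span N {w \<in> carrier N. pr w \<in> P}"
    have "x \<in> P" if "push pr g x \<noteq> 0" for x
      using push_nz[OF that] a unfolding lin_span_def by blast
    then show "push pr g \<in> lin_span M P" using push_car[OF g] unfolding lin_span_def by blast
  }
qed

lemma push_surj: "f \<in> carrier (monoid_alg M :: ('a \<Rightarrow> 'k::field) ring) \<Longrightarrow>
   \<exists>g \<in> carrier (monoid_alg N :: ('c \<Rightarrow> 'k) ring). push pr g = f"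
proof -
  assume f: "f \<in> carrier (monoid_alg M :: ('a \<Rightarrow> 'k::field) ring)"
  define rep where "rep = (\<lambda>a. SOME w. w \<in> carrier N \<and> pr w = a)"
  let ?S = "{x. f x \<noteq> 0}"
  have fS: "finite ?S" and Sc: "?S \<subseteq> carrier M" using f unfolding alg_carrier by auto
  have rep: "rep a \<in> carrier N \<and> pr (rep a) = a" if "a \<in> carrier M" for a
    unfolding rep_def using H4[OF that] by (metis (mono_tags, lifting) someI_ex)
  define g where "g = (\<lambda>w. if w \<in> rep ` ?S then f (pr w) else 0)"
  have gsup: "{w. g w \<noteq> 0} \<subseteq> rep ` ?S" unfolding g_def by auto
  have gc: "g \<in> carrier (monoid_alg N :: ('c \<Rightarrow> 'k) ring)"
    unfolding alg_carrier using gsup fS rep Sc by (auto intro: finite_subset simp: g_def)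
  have inj: "inj_on rep ?S" using rep Sc by (metis inj_on_inverseI subsetD)
  have "push pr g a = f a" for a
  proof -
    have "push pr g a = (\<Sum>w\<in>rep ` ?S. if pr w = a then g w else 0)"
      by (rule push_sup[OF _ gsup]) (simp add: fS)
    also have "\<dots> = (\<Sum>b\<in>?S. if pr (rep b) = a then g (rep b) else 0)"
      by (simp add: sum.reindex[OF inj])
    also have "\<dots> = (\<Sum>b\<in>?S. if b = a then f b else 0)"
    proof (intro sum.cong refl)
      fix b assume "b \<in> ?S"
      then have "pr (rep b) = b" "g (rep b) = f b" using rep Sc unfolding g_def by auto
      then show "(if pr (rep b) = a then g (rep b) else 0) = (if b = a then f b else 0)" by auto
    qed
    also have "\<dots> = f a" using fS by simp
    finally show ?thesis .
  qed
  then show ?thesis using gc by blast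
qed

lemma is_qiso: "qiso M N (push pr :: ('c \<Rightarrow> 'k::field) \<Rightarrow> ('a \<Rightarrow> 'k)) P {w \<in> carrier N. pr w \<in> P}"
  by (unfold_locales) (auto simp: push_car push_add push_diff push_scal mult_closed push_mult one_car push_one push_surj push_ker)

end



lemma FM_simps: "carrier (FM n) = lists {..<n}" "u \<otimes>\<^bsub>FM n\<^esub> v = u @ v" "\<one>\<^bsub>FM n\<^esub> = []"
  by (simp_all add: FM_def)

lemma S_simps: "carrier (S n) = spi n ` lists {..<n}" "\<one>\<^bsub>S n\<^esub> = spi n []"
  by (simp_all add: S_def)

lemma inP_iff:
  assumes w: "w \<in> lists {..<n}"
  shows "spi n w \<in> {spi n (zword n) \<otimes>\<^bsub>S n\<^esub> a | a. a \<in> carrier (S n)} \<longleftrightarrow> hasrot n w"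
proof
  assume "spi n w \<in> {spi n (zword n) \<otimes>\<^bsub>S n\<^esub> a | a. a \<in> carrier (S n)}"
  then obtain u where u: "u \<in> lists {..<n}" "spi n w = spi n (zword n) \<otimes>\<^bsub>S n\<^esub> spi n u"
    unfolding S_simps by blast
  then have "spi n w = spi n (zword n @ u)" using S_mult[OF z_lists u(1)] by simp
  then have "(w, zword n @ u) \<in> Scong n" using spi_eq_iff[OF w] z_lists u(1) by simp
  then show "hasrot n w" using P_hasrot Scong_sym by blast
next
  assume "hasrot n w"
  then obtain u where u: "u \<in> lists {..<n}" "(zword n @ u, w) \<in> Scong n" using hasrot_P by blast
  then have "spi n w = spi n (zword n @ u)" using spi_eq_iff[OF w] z_lists Scong_sym by simp
  also have "\<dots> = spi n (zword n) \<otimes>\<^bsub>S n\<^esub> spi n u" using S_mult[OF z_lists u(1)] by simp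
  finally show "spi n w \<in> {spi n (zword n) \<otimes>\<^bsub>S n\<^esub> a | a. a \<in> carrier (S n)}"
    using u(1) unfolding S_simps by blast
qed

lemma fiber: "w \<in> lists {..<n} \<Longrightarrow> {w' \<in> carrier (FM n). spi n w' = spi n w} = spi n w"
proof -
  assume w: "w \<in> lists {..<n}"
  have "w' \<in> lists {..<n} \<and> spi n w' = spi n w \<longleftrightarrow> w' \<in> spi n w" for w'
  proof
    assume "w' \<in> lists {..<n} \<and> spi n w' = spi n w"
    then show "w' \<in> spi n w" using spi_self by metis
  next
    assume a: "w' \<in> spi n w"
    then have "(w,w') \<in> Scong n" unfolding spi_def by simp
    then show "w' \<in> lists {..<n} \<and> spi n w' = spi n w" using spi_eq_iff[OF w] Scong_lists by blast
  qed
  then show ?thesis unfolding FM_simps by blast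
qed

lemma H5:
  assumes w: "w \<in> lists {..<n}" and nP: "spi n w \<notin> {spi n (zword n) \<otimes>\<^bsub>S n\<^esub> a | a. a \<in> carrier (S n)}"
    and w': "w' \<in> lists {..<n}" "spi n w' = spi n w"
  shows "w' = w"
proof -
  have "\<not> hasrot n w" using inP_iff[OF w] nP by blast
  then have "spi n w = {w}" using nohasrot_spi w by blast
  then show ?thesis using spi_self[OF w'(1)] w'(2) by blast
qed

theorem mainTheorem2:
  fixes n :: nat
  assumes "n \<ge> 3"
  defines "z \<equiv> spi n (zword n)"
    and "P \<equiv> {spi n (zword n) \<otimes>\<^bsub>S n\<^esub> a | a. a \<in> carrier (S n)}"
  shows "(\<forall>a \<in> carrier (S n). z \<otimes>\<^bsub>S n\<^esub> a = a \<otimes>\<^bsub>S n\<^esub> z)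
    \<and> carrier (S n) - P = {a \<in> carrier (S n). card {w \<in> carrier (FM n). spi n w = a} = 1}
    \<and> map_option (spi n) \<in> iso (rees (FM n) {w \<in> carrier (FM n). spi n w \<in> P}) (rees (S n) P)
    \<and> alg_iso_quot
        ((monoid_alg (S n) :: (nat list set \<Rightarrow> 'k::field) ring) Quot lin_span (S n) P)
        ((monoid_alg (FM n) :: (nat list \<Rightarrow> 'k) ring)
            Quot lin_span (FM n) {w \<in> carrier (FM n). spi n w \<in> P}) \<noteq> {}"
proof (intro conjI)
  have n2: "n \<ge> 2" using assms(1) by simp
  have Pw: "w \<in> lists {..<n} \<Longrightarrow> spi n w \<in> P \<longleftrightarrow> hasrot n w" for w
    unfolding P_def by (rule inP_iff)
  show "\<forall>a \<in> carrier (S n). z \<otimes>\<^bsub>S n\<^esub> a = a \<otimes>\<^bsub>S n\<^esub> z"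
  proof
    fix a assume "a \<in> carrier (S n)"
    then obtain u where u: "u \<in> lists {..<n}" "a = spi n u" unfolding S_simps by blast
    have "(zword n @ u, u @ zword n) \<in> Scong n" by (rule comm[OF u(1)])
    then have "spi n (zword n @ u) = spi n (u @ zword n)" using spi_eq_iff z_lists u(1) by simp
    then show "z \<otimes>\<^bsub>S n\<^esub> a = a \<otimes>\<^bsub>S n\<^esub> z" unfolding z_def u(2)
      using S_mult[OF z_lists u(1)] S_mult[OF u(1) z_lists] by simp
  qed
  show "carrier (S n) - P = {a \<in> carrier (S n). card {w \<in> carrier (FM n). spi n w = a} = 1}"
  proof (rule Set.set_eqI, rule iffI)
    fix a assume a: "a \<in> carrier (S n) - P"
    then obtain w where w: "w \<in> lists {..<n}" "a = spi n w" unfolding S_simps by blast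
    then have "\<not> hasrot n w" using Pw a by blast
    then have "spi n w = {w}" using nohasrot_spi w(1) by blast
    then show "a \<in> {a \<in> carrier (S n). card {w \<in> carrier (FM n). spi n w = a} = 1}"
      using a w fiber[OF w(1)] by simp
  next
    fix a assume a: "a \<in> {a \<in> carrier (S n). card {w \<in> carrier (FM n). spi n w = a} = 1}"
    then obtain w where w: "w \<in> lists {..<n}" "a = spi n w" unfolding S_simps by blast
    have c: "card (spi n w) = 1" using a w fiber[OF w(1)] by simp
    have "\<not> hasrot n w"
    proof
      assume "hasrot n w"
      then obtain w' where "w' \<noteq> w" "w' \<in> spi n w" using hasrot_two n2 by blast
      moreover have "w \<in> spi n w" using spi_self w(1) by blast
      ultimately show False using c by (metis card_1_singletonE singletonD)
    qed
    then show "a \<in> carrier (S n) - P" using a w Pw by blast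
  qed
  let ?I = "{w \<in> carrier (FM n). spi n w \<in> P}"
  show "map_option (spi n) \<in> iso (rees (FM n) ?I) (rees (S n) P)"
  proof -
    have cF: "carrier (rees (FM n) ?I) = insert None (Some ` {w \<in> lists {..<n}. \<not> hasrot n w})"
      unfolding rees_def FM_simps using Pw by auto
    have cS: "carrier (rees (S n) P) = insert None (Some ` (spi n ` {w \<in> lists {..<n}. \<not> hasrot n w}))"
      unfolding rees_def S_simps using Pw by auto
    have mF: "x \<otimes>\<^bsub>rees (FM n) ?I\<^esub> y = (case (x, y) of (Some a, Some b) \<Rightarrow> (if hasrot n (a @ b) then None else Some (a @ b)) | _ \<Rightarrow> None)"
      if "x \<in> carrier (rees (FM n) ?I)" "y \<in> carrier (rees (FM n) ?I)" for x y
    proof (cases x; cases y)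
      fix a b assume ab: "x = Some a" "y = Some b"
      then have l: "a @ b \<in> lists {..<n}" using that unfolding cF by auto
      show ?thesis using ab Pw[OF l] l by (simp add: rees_def FM_simps)
    qed (auto simp: rees_def)
    have mS: "Some (spi n a) \<otimes>\<^bsub>rees (S n) P\<^esub> Some (spi n b) = (if hasrot n (a @ b) then None else Some (spi n (a @ b)))"
      if "a \<in> lists {..<n}" "b \<in> lists {..<n}" for a b
      using that Pw S_mult[OF that] by (simp add: rees_def)
    have mN: "None \<otimes>\<^bsub>rees (S n) P\<^esub> y = None" "y \<otimes>\<^bsub>rees (S n) P\<^esub> None = None" for y
      by (auto simp: rees_def split: option.splits)
    have hom: "map_option (spi n) \<in> hom (rees (FM n) ?I) (rees (S n) P)"
    proof (rule homI)
      fix x assume "x \<in> carrier (rees (FM n) ?I)"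
      then show "map_option (spi n) x \<in> carrier (rees (S n) P)" unfolding cF cS by auto
    next
      fix x y assume xy: "x \<in> carrier (rees (FM n) ?I)" "y \<in> carrier (rees (FM n) ?I)"
      show "map_option (spi n) (x \<otimes>\<^bsub>rees (FM n) ?I\<^esub> y) = map_option (spi n) x \<otimes>\<^bsub>rees (S n) P\<^esub> map_option (spi n) y"
      proof (cases x; cases y)
        fix a b assume ab: "x = Some a" "y = Some b"
        then have l: "a \<in> lists {..<n}" "b \<in> lists {..<n}" using xy unfolding cF by auto
        show ?thesis using ab mF[OF xy] mS[OF l] by simp
      qed (auto simp: mN rees_def)
    qed
    have inj: "inj_on (map_option (spi n)) (carrier (rees (FM n) ?I))"
    proof
      fix x y assume xy: "x \<in> carrier (rees (FM n) ?I)" "y \<in> carrier (rees (FM n) ?I)"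
        "map_option (spi n) x = map_option (spi n) y"
      show "x = y"
      proof (cases x)
        case None then show ?thesis using xy by simp
      next
        case (Some a)
        then obtain b where b: "y = Some b" using xy by (cases y) auto
        have a: "a \<in> lists {..<n}" "\<not> hasrot n a" using xy(1) Some unfolding cF by auto
        have bl: "b \<in> lists {..<n}" using xy(2) b unfolding cF by auto
        have "spi n b = spi n a" using xy(3) Some b by simp
        then have "b = a" using H5[OF a(1) _ bl] Pw[OF a(1)] a(2) unfolding P_def by blast
        then show ?thesis using Some b by simp
      qed
    qed
    have img: "map_option (spi n) ` carrier (rees (FM n) ?I) = carrier (rees (S n) P)"
      unfolding cF cS by (auto simp: image_image)
    show ?thesis unfolding iso_def bij_betw_def using hom inj img by blast
  qed
  interpret pc: pctx "S n" "FM n" "spi n" P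
  proof
    show "\<And>w. w \<in> carrier (FM n) \<Longrightarrow> spi n w \<in> carrier (S n)" unfolding FM_simps S_simps by blast
    show "\<And>u v. u \<in> carrier (FM n) \<Longrightarrow> v \<in> carrier (FM n) \<Longrightarrow> u \<otimes>\<^bsub>FM n\<^esub> v \<in> carrier (FM n)"
      unfolding FM_simps by simp
    show "\<And>u v. u \<in> carrier (FM n) \<Longrightarrow> v \<in> carrier (FM n) \<Longrightarrow> spi n (u \<otimes>\<^bsub>FM n\<^esub> v) = spi n u \<otimes>\<^bsub>S n\<^esub> spi n v"
      unfolding FM_simps using S_mult by simp
    show "\<one>\<^bsub>FM n\<^esub> \<in> carrier (FM n)" unfolding FM_simps by simp
    show "spi n \<one>\<^bsub>FM n\<^esub> = \<one>\<^bsub>S n\<^esub>" unfolding FM_simps S_simps by simp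
    show "\<And>a. a \<in> carrier (S n) \<Longrightarrow> \<exists>w\<in>carrier (FM n). spi n w = a" unfolding FM_simps S_simps by blast
    show "\<And>w w'. w \<in> carrier (FM n) \<Longrightarrow> spi n w \<notin> P \<Longrightarrow> w' \<in> carrier (FM n) \<Longrightarrow> spi n w' = spi n w \<Longrightarrow> w' = w"
      unfolding FM_simps P_def using H5 by blast
  qed
  interpret qi: qiso "S n" "FM n" "push (spi n) :: (nat list \<Rightarrow> 'k) \<Rightarrow> (nat list set \<Rightarrow> 'k)" P ?I
    by (rule pc.is_qiso)
  show "alg_iso_quot
        ((monoid_alg (S n) :: (nat list set \<Rightarrow> 'k::field) ring) Quot lin_span (S n) P)
        ((monoid_alg (FM n) :: (nat list \<Rightarrow> 'k) ring)
            Quot lin_span (FM n) ?I) \<noteq> {}"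
    using qi.iso by blast
qed


end
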